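(* Consider the $1$-median problem in $\mathbb{R}^1$ where object $i$ has its own maximum speed $v_i>0$. Let $v_M=\max_i v_i$ and $v_m=\min_i v_i$. There is an absolute constant $C$ such that on every instance $I$ with $n$ objects, the measure of the Round-robin strategy is at most $C\,\frac{v_M n}{v_m}\cdot\mathrm{OPT}(I)$.
   Context: Setting. There are $n\ge 2$ objects in $\mathbb{R}^d$; object $i$ follows a trajectory $p_i:[0,\infty)\to\mathbb{R}^d$ with $|p_i(t)-p_i(s)|\le v_i|t-s|$ for all $s,t$, where $v_i>0$ is a known speed bound for object $i$. The initial positions $p_i(0)$ are known. A query strategy queries one object at each time $t=1,2,3,\dots$; querying object $i$ at time $t$ reveals $p_i(t)$. For $t\ge 0$ let $\tau_i(t)$ be the last time $\le t$ at which object $i$ was queried (or $0$ if never). The uncertainty region of object $i$ at time $t$ is the closed ball $U_i(t)$ of radius $v_i(t-\tau_i(t))$ centered at $p_i(\tau_i(t))$. For a center function $f$ mapping an $n$-tuple of points to a point, the uncertainty region of the center at time $t$ is $\{f(q_1,\dots,q_n): q_i\in U_i(t)\}$. The size of a set is its diameter. The measure of a strategy on an instance is the supremum over $t\in\{1,2,\dots\}$ of the size of the center's uncertainty region at time $t$ (just after the query at time $t$). The optimal measure $\mathrm{OPT}(I)$ of an instance $I$ is the infimum of the measure over all query sequences, which may be chosen with full knowledge of the trajectories. The Round-robin strategy queries objects $1,2,\dots,n,1,2,\dots,n,\dots$ in a fixed cyclic order. Here $d=1$ and the center function is the $1$-median: for $x_1,\dots,x_n\in\mathbb{R}$ it is the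 $\lceil n/2\rceil$-th smallest of the $x_i$ if $n$ is odd, and the midpoint of the $(n/2)$-th and $(n/2+1)$-th smallest if $n$ is even. *)

theory Defs
  imports "HOL-Analysis.Analysis"
begin

text \<open>Objects are indexed 0..n-1. A trajectory family p :: nat => real => real;
object i at time t is at p i t. A query strategy is a sequence sigma :: nat => nat,
sigma t being the object queried at time t (t = 1,2,...).\<close>

definition valid_instance :: "nat \<Rightarrow> (nat \<Rightarrow> real) \<Rightarrow> (nat \<Rightarrow> real \<Rightarrow> real) \<Rightarrow> bool" where
  "valid_instance n v p \<longleftrightarrow> n \<ge> 2 \<and> (\<forall>i<n. v i > 0) \<and>
     (\<forall>i<n. \<forall>s\<ge>0. \<forall>t\<ge>0. \<bar>p i t - p i s\<bar> \<le> v i * \<bar>t - s\<bar>)"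

definition valid_strategy :: "nat \<Rightarrow> (nat \<Rightarrow> nat) \<Rightarrow> bool" where
  "valid_strategy n \<sigma> \<longleftrightarrow> (\<forall>t\<ge>1. \<sigma> t < n)"

definition last_query :: "(nat \<Rightarrow> nat) \<Rightarrow> nat \<Rightarrow> nat \<Rightarrow> nat" where
  "last_query \<sigma> i t = Max ({0} \<union> {k. 1 \<le> k \<and> k \<le> t \<and> \<sigma> k = i})"

definition unc_region :: "(nat \<Rightarrow> real) \<Rightarrow> (nat \<Rightarrow> real \<Rightarrow> real) \<Rightarrow> (nat \<Rightarrow> nat) \<Rightarrow> nat \<Rightarrow> nat \<Rightarrow> real set" where
  "unc_region v p \<sigma> i t = cball (p i (real (last_query \<sigma> i t)))
       (v i * (real t - real (last_query \<sigma> i t)))"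

definition median1 :: "real list \<Rightarrow> real" where
  "median1 xs = (let ys = sort xs; m = length xs in
     if odd m then ys ! (m div 2) else (ys ! (m div 2 - 1) + ys ! (m div 2)) / 2)"

definition center_region :: "nat \<Rightarrow> (nat \<Rightarrow> real) \<Rightarrow> (nat \<Rightarrow> real \<Rightarrow> real) \<Rightarrow> (nat \<Rightarrow> nat) \<Rightarrow> nat \<Rightarrow> real set" where
  "center_region n v p \<sigma> t =
     {median1 (map q [0..<n]) | q. \<forall>i<n. q i \<in> unc_region v p \<sigma> i t}"

text \<open>Size = diameter (the region is bounded). Measure = sup over t = 1,2,...\<close>
definition measure_strat :: "nat \<Rightarrow> (nat \<Rightarrow> real) \<Rightarrow> (nat \<Rightarrow> real \<Rightarrow> real) \<Rightarrow> (nat \<Rightarrow> nat) \<Rightarrow> ereal" where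
  "measure_strat n v p \<sigma> = (SUP t\<in>{1..}. ereal (diameter (center_region n v p \<sigma> t)))"

definition OPT :: "nat \<Rightarrow> (nat \<Rightarrow> real) \<Rightarrow> (nat \<Rightarrow> real \<Rightarrow> real) \<Rightarrow> ereal" where
  "OPT n v p = (INF \<sigma>\<in>{\<sigma>. valid_strategy n \<sigma>}. measure_strat n v p \<sigma>)"

definition round_robin :: "nat \<Rightarrow> nat \<Rightarrow> nat" where
  "round_robin n t = (t - 1) mod n"

end

theory Submission
  imports Defs
begin



lemma len_filter_sort: "length (filter P (sort xs)) = length (filter P xs)"
  by (simp add: filter_sort)

lemma len_filter_map_upt: "length (filter P (map x [0..<n])) = card {i. i < n \<and> P (x i)}"
proof -
  have "length (filter P (map x [0..<n])) = length (filter (P \<circ> x) [0..<n])"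
    by (simp add: filter_map)
  also have "\<dots> = card (set (filter (P \<circ> x) [0..<n]))"
    by (rule distinct_card[symmetric]) simp
  also have "set (filter (P \<circ> x) [0..<n]) = {i. i < n \<and> P (x i)}" by auto
  finally show ?thesis .
qed

lemma len_filter_comp_upt: "length (filter (P \<circ> x) [0..<n]) = card {i. i < n \<and> P (x i)}"
  using len_filter_map_upt[of P x n] by (simp add: filter_map)

lemma sorted_C1:
  fixes ys :: "real list"
  assumes "sorted ys" "j < length ys"
  shows "Suc j \<le> length (filter (\<lambda>z. z \<le> ys!j) ys)"
proof -
  have "ys = take (Suc j) ys @ drop (Suc j) ys" by simp
  hence "length (filter (\<lambda>z. z \<le> ys!j) ys) = length (filter (\<lambda>z. z \<le> ys!j) (take (Suc j) ys)) + length (filter (\<lambda>z. z \<le> ys!j) (drop (Suc j) ys))"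
    by (metis filter_append length_append)
  moreover have "filter (\<lambda>z. z \<le> ys!j) (take (Suc j) ys) = take (Suc j) ys"
  proof (rule filter_True, intro ballI)
    fix z assume "z \<in> set (take (Suc j) ys)"
    then obtain i where "i < length (take (Suc j) ys)" "take (Suc j) ys ! i = z" by (auto simp: in_set_conv_nth)
    thus "z \<le> ys!j" using assms sorted_nth_mono[of ys i j] by auto
  qed
  ultimately show ?thesis using assms by simp
qed

lemma sorted_C2:
  fixes ys :: "real list"
  assumes "sorted ys" "j < length ys"
  shows "length ys - j \<le> length (filter (\<lambda>z. ys!j \<le> z) ys)"
proof -
  have "ys = take j ys @ drop j ys" by simp
  hence "length (filter (\<lambda>z. ys!j \<le> z) ys) = length (filter (\<lambda>z. ys!j \<le> z) (take j ys)) + length (filter (\<lambda>z. ys!j \<le> z) (drop j ys))"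
    by (metis filter_append length_append)
  moreover have "filter (\<lambda>z. ys!j \<le> z) (drop j ys) = drop j ys"
  proof (rule filter_True, intro ballI)
    fix z assume "z \<in> set (drop j ys)"
    then obtain i where "i < length (drop j ys)" "drop j ys ! i = z" by (auto simp: in_set_conv_nth)
    thus "ys!j \<le> z" using assms sorted_nth_mono[of ys j "j+i"] by auto
  qed
  ultimately show ?thesis using assms by simp
qed

lemma sorted_C3:
  fixes ys :: "real list"
  assumes "sorted ys" "j < length ys" "Suc j \<le> length (filter (\<lambda>z. z \<le> y) ys)"
  shows "ys!j \<le> y"
proof (rule ccontr)
  assume "\<not> ys!j \<le> y"
  have "ys = take j ys @ drop j ys" by simp
  hence "length (filter (\<lambda>z. z \<le> y) ys) = length (filter (\<lambda>z. z \<le> y) (take j ys)) + length (filter (\<lambda>z. z \<le> y) (drop j ys))"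
    by (metis filter_append length_append)
  moreover have "filter (\<lambda>z. z \<le> y) (drop j ys) = []"
  proof (rule filter_False, intro ballI)
    fix z assume "z \<in> set (drop j ys)"
    then obtain i where "i < length (drop j ys)" "drop j ys ! i = z" by (auto simp: in_set_conv_nth)
    then have "z = ys!(j+i)" "j+i < length ys" by auto
    moreover have "ys!j \<le> ys!(j+i)" using assms calculation(2) by (intro sorted_nth_mono) auto
    ultimately show "\<not> z \<le> y" using \<open>\<not> ys!j \<le> y\<close> by auto
  qed
  moreover have "length (filter (\<lambda>z. z \<le> y) (take j ys)) \<le> j"
    by (metis length_filter_le length_take min.bounded_iff order.refl order_trans)
  ultimately show False using assms by simp
qed

lemma sorted_C4:
  fixes ys :: "real list"
  assumes "sorted ys" "j < length ys" "length ys - j \<le> length (filter (\<lambda>z. y \<le> z) ys)"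
  shows "y \<le> ys!j"
proof (rule ccontr)
  assume "\<not> y \<le> ys!j"
  have "ys = take (Suc j) ys @ drop (Suc j) ys" by simp
  hence "length (filter (\<lambda>z. y \<le> z) ys) = length (filter (\<lambda>z. y \<le> z) (take (Suc j) ys)) + length (filter (\<lambda>z. y \<le> z) (drop (Suc j) ys))"
    by (metis filter_append length_append)
  moreover have "filter (\<lambda>z. y \<le> z) (take (Suc j) ys) = []"
  proof (rule filter_False, intro ballI)
    fix z assume "z \<in> set (take (Suc j) ys)"
    then obtain i where "i < length (take (Suc j) ys)" "take (Suc j) ys ! i = z" by (auto simp: in_set_conv_nth)
    thus "\<not> y \<le> z" using assms \<open>\<not> y \<le> ys!j\<close> sorted_nth_mono[of ys i j] by auto
  qed
  moreover have "length (filter (\<lambda>z. y \<le> z) (drop (Suc j) ys)) \<le> length ys - Suc j"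
    by (metis length_drop length_filter_le)
  ultimately show False using assms by simp
qed

definition os :: "nat \<Rightarrow> (nat \<Rightarrow> real) \<Rightarrow> nat \<Rightarrow> real" where
  "os n x j = sort (map x [0..<n]) ! j"

lemma OC1: "j < n \<Longrightarrow> Suc j \<le> card {i. i < n \<and> x i \<le> os n x j}"
  using sorted_C1[of "sort (map x [0..<n])" j]
  by (simp add: os_def len_filter_sort len_filter_map_upt len_filter_comp_upt)

lemma OC2: "j < n \<Longrightarrow> n - j \<le> card {i. i < n \<and> os n x j \<le> x i}"
  using sorted_C2[of "sort (map x [0..<n])" j]
  by (simp add: os_def len_filter_sort len_filter_map_upt len_filter_comp_upt)

lemma OC3: "j < n \<Longrightarrow> Suc j \<le> card {i. i < n \<and> x i \<le> y} \<Longrightarrow> os n x j \<le> y"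
  using sorted_C3[of "sort (map x [0..<n])" j y]
  by (simp add: os_def len_filter_sort len_filter_map_upt len_filter_comp_upt)

lemma OC4: "j < n \<Longrightarrow> n - j \<le> card {i. i < n \<and> y \<le> x i} \<Longrightarrow> y \<le> os n x j"
  using sorted_C4[of "sort (map x [0..<n])" j y]
  by (simp add: os_def len_filter_sort len_filter_map_upt len_filter_comp_upt)

lemma median_os: "median1 (map x [0..<n]) =
   (if odd n then os n x (n div 2) else (os n x (n div 2 - 1) + os n x (n div 2)) / 2)"
  by (simp add: median1_def os_def Let_def)

lemma card_mono_le: fixes n :: nat shows "(\<And>i. i < n \<Longrightarrow> P i \<Longrightarrow> Q i) \<Longrightarrow> card {i. i < n \<and> P i} \<le> card {i. i < n \<and> Q i}"
proof (rule card_mono)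
  show "finite {i. i < n \<and> Q i}" by simp
qed auto

lemma os_mono:
  assumes "j < n" "\<And>i. i < n \<Longrightarrow> x i \<le> y i + e"
  shows "os n x j \<le> os n y j + e"
proof (rule OC3[OF assms(1)])
  have "Suc j \<le> card {i. i < n \<and> y i \<le> os n y j}" by (rule OC1[OF assms(1)])
  also have "\<dots> \<le> card {i. i < n \<and> x i \<le> os n y j + e}"
    by (rule card_mono_le) (use assms(2) in force)
  finally show "Suc j \<le> card {i. i < n \<and> x i \<le> os n y j + e}" .
qed

lemma median_mono:
  assumes "n \<ge> 1" "\<And>i. i < n \<Longrightarrow> x i \<le> y i + e"
  shows "median1 (map x [0..<n]) \<le> median1 (map y [0..<n]) + e"
proof -
  have a: "os n x (n div 2) \<le> os n y (n div 2) + e" using assms by (intro os_mono) auto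
  have b: "os n x (n div 2 - 1) \<le> os n y (n div 2 - 1) + e" using assms by (intro os_mono) auto
  show ?thesis using a b by (simp add: median_os field_simps)
qed

lemma median_lip:
  assumes "n \<ge> 1" "\<And>i. i < n \<Longrightarrow> \<bar>x i - y i\<bar> \<le> e"
  shows "\<bar>median1 (map x [0..<n]) - median1 (map y [0..<n])\<bar> \<le> e"
proof -
  have "median1 (map x [0..<n]) \<le> median1 (map y [0..<n]) + e"
    using assms by (intro median_mono) (auto simp: abs_le_iff dest!: assms(2))
  moreover have "median1 (map y [0..<n]) \<le> median1 (map x [0..<n]) + e"
    using assms by (intro median_mono) (auto simp: abs_le_iff dest!: assms(2))
  ultimately show ?thesis by auto
qed




lemma lq_fin: "finite ({0::nat} \<union> {k. 1 \<le> k \<and> k \<le> t \<and> \<sigma> k = i})"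
  by (rule finite_subset[of _ "{..t}"]) auto

lemma lq_le: "last_query \<sigma> i t \<le> t"
  unfolding last_query_def using lq_fin[of t \<sigma> i] by (subst Max_le_iff) auto

lemma lq_self: "1 \<le> t \<Longrightarrow> \<sigma> t = i \<Longrightarrow> last_query \<sigma> i t = t"
  unfolding last_query_def using lq_fin[of t \<sigma> i] by (intro Max_eqI) auto

lemma lq_lt: "1 \<le> t \<Longrightarrow> \<sigma> t \<noteq> i \<Longrightarrow> last_query \<sigma> i t < t"
  unfolding last_query_def using lq_fin[of t \<sigma> i]
  by (subst Max_less_iff) (auto simp: le_less)

lemma lq_Suc: "\<sigma> (Suc t) \<noteq> i \<Longrightarrow> last_query \<sigma> i (Suc t) = last_query \<sigma> i t"
proof -
  assume a: "\<sigma> (Suc t) \<noteq> i"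
  have "{k. 1 \<le> k \<and> k \<le> Suc t \<and> \<sigma> k = i} = {k. 1 \<le> k \<and> k \<le> t \<and> \<sigma> k = i}"
    using a by (auto simp: le_Suc_eq)
  thus ?thesis by (simp add: last_query_def)
qed

lemma lq_rr:
  assumes "0 < n" "i < n"
  shows "t \<le> last_query (round_robin n) i t + n"
proof (cases "t \<le> n")
  case True thus ?thesis by simp
next
  case False
  define k where "k = t - ((t - 1 - i) mod n)"
  have m: "(t - 1 - i) mod n < n" using assms by simp
  have dv: "t - 1 - i = n * ((t - 1 - i) div n) + (t - 1 - i) mod n" by simp
  have k1: "1 \<le> k" "k \<le> t" "t \<le> k + n" using False m by (auto simp: k_def)
  have "k - 1 = i + n * ((t - 1 - i) div n)" using False assms dv unfolding k_def by linarith
  hence "round_robin n k = i" unfolding round_robin_def using assms by simp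
  hence "k \<le> last_query (round_robin n) i t"
    unfolding last_query_def using lq_fin[of t "round_robin n" i] k1 by (intro Max_ge) auto
  thus ?thesis using k1 by linarith
qed




locale inst =
  fixes n :: nat and v :: "nat \<Rightarrow> real" and p :: "nat \<Rightarrow> real \<Rightarrow> real" and \<sigma> :: "nat \<Rightarrow> nat"
  assumes vi: "valid_instance n v p" and vs: "valid_strategy n \<sigma>"
begin

definition "a i t = p i (real (last_query \<sigma> i t))"
definition "r i t = v i * (real t - real (last_query \<sigma> i t))"
definition "lo i t = a i t - r i t"
definition "hi i t = a i t + r i t"
definition "Vmin = Min (v ` {..<n})"
definition "c t = p (\<sigma> t) (real t)"
definition "med x = median1 (map x [0..<n])"
definition "dm t = diameter (center_region n v p \<sigma> t)"

lemma n2: "2 \<le> n" using vi by (simp add: valid_instance_def)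
lemma vpos: "i < n \<Longrightarrow> 0 < v i" using vi by (simp add: valid_instance_def)
lemma sig: "1 \<le> t \<Longrightarrow> \<sigma> t < n" using vs by (simp add: valid_strategy_def)

lemma Vmin_le: "i < n \<Longrightarrow> Vmin \<le> v i"
  unfolding Vmin_def by (rule Min_le) auto

lemma Vmin_pos: "0 < Vmin"
proof -
  have "Vmin \<in> v ` {..<n}" unfolding Vmin_def proof (rule Min_in)
    have "0 \<in> {..<n}" using n2 by simp
    thus "v ` {..<n} \<noteq> {}" by blast
  qed simp
  thus ?thesis using vpos by auto
qed

lemma r_nonneg: "i < n \<Longrightarrow> 0 \<le> r i t"
  unfolding r_def using vpos[of i] lq_le[of \<sigma> i t] by simp

lemma r_self: "1 \<le> t \<Longrightarrow> r (\<sigma> t) t = 0"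
  unfolding r_def using lq_self[of t \<sigma>] by simp

lemma a_self: "1 \<le> t \<Longrightarrow> a (\<sigma> t) t = c t"
  unfolding a_def c_def using lq_self[of t \<sigma>] by simp

lemma r_other: "1 \<le> t \<Longrightarrow> i < n \<Longrightarrow> i \<noteq> \<sigma> t \<Longrightarrow> v i \<le> r i t"
proof -
  assume "1 \<le> t" "i < n" "i \<noteq> \<sigma> t"
  hence "last_query \<sigma> i t < t" using lq_lt[of t \<sigma> i] by auto
  hence "1 \<le> real t - real (last_query \<sigma> i t)" by linarith
  thus ?thesis unfolding r_def using vpos[OF \<open>i < n\<close>] by (simp add: mult_le_cancel_left1)
qed

lemma a_Suc: "\<sigma> (Suc t) \<noteq> i \<Longrightarrow> a i (Suc t) = a i t"
  unfolding a_def using lq_Suc by simp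

lemma r_Suc: "\<sigma> (Suc t) \<noteq> i \<Longrightarrow> r i (Suc t) = r i t + v i"
  unfolding r_def using lq_Suc[of \<sigma> t i] by (simp add: algebra_simps)

lemma region_mem:
  assumes "\<And>i. i < n \<Longrightarrow> \<bar>q i - a i t\<bar> \<le> r i t"
  shows "med q \<in> center_region n v p \<sigma> t"
  unfolding center_region_def med_def unc_region_def
  using assms by (auto simp: dist_real_def a_def r_def abs_minus_commute)

lemma region_near:
  assumes "z \<in> center_region n v p \<sigma> t" "\<And>i. i < n \<Longrightarrow> r i t \<le> B"
  shows "\<bar>z - med (\<lambda>i. a i t)\<bar> \<le> B"
proof -
  obtain q where q: "z = median1 (map q [0..<n])" "\<And>i. i < n \<Longrightarrow> q i \<in> unc_region v p \<sigma> i t"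
    using assms(1) unfolding center_region_def by auto
  have "\<And>i. i < n \<Longrightarrow> \<bar>q i - a i t\<bar> \<le> B"
  proof -
    fix i assume "i < n"
    hence "\<bar>q i - a i t\<bar> \<le> r i t" using q(2)[of i]
      by (auto simp: unc_region_def dist_real_def a_def r_def abs_minus_commute)
    thus "\<bar>q i - a i t\<bar> \<le> B" using assms(2)[OF \<open>i<n\<close>] by linarith
  qed
  thus ?thesis unfolding q(1) med_def using n2 by (intro median_lip) auto
qed

lemma region_bounded: "bounded (center_region n v p \<sigma> t)"
proof -
  define B where "B = (\<Sum>i<n. r i t)"
  have rb: "\<And>i. i < n \<Longrightarrow> r i t \<le> B"
    unfolding B_def by (rule member_le_sum) (auto intro: r_nonneg)
  have "center_region n v p \<sigma> t \<subseteq> cball (med (\<lambda>i. a i t)) B"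
    using region_near[OF _ rb] by (auto simp: dist_real_def abs_minus_commute)
  thus ?thesis using bounded_cball bounded_subset by blast
qed

lemma dm_upper:
  assumes "\<And>i. i < n \<Longrightarrow> r i t \<le> B" "0 \<le> B"
  shows "dm t \<le> 2 * B"
  unfolding dm_def
proof (rule diameter_le)
  show "center_region n v p \<sigma> t \<noteq> {} \<or> 0 \<le> 2 * B" using assms by auto
  fix x y assume x: "x \<in> center_region n v p \<sigma> t" and y: "y \<in> center_region n v p \<sigma> t"
  have "\<bar>x - med (\<lambda>i. a i t)\<bar> \<le> B" by (rule region_near[OF x]) (rule assms(1))
  moreover have "\<bar>y - med (\<lambda>i. a i t)\<bar> \<le> B" by (rule region_near[OF y]) (rule assms(1))
  ultimately show "norm (x - y) \<le> 2 * B" by simp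
qed

lemma dm_lower: "med (\<lambda>i. hi i t) - med (\<lambda>i. lo i t) \<le> dm t"
proof -
  have "med (\<lambda>i. hi i t) \<in> center_region n v p \<sigma> t"
    by (rule region_mem) (auto simp: hi_def intro: r_nonneg)
  moreover have "med (\<lambda>i. lo i t) \<in> center_region n v p \<sigma> t"
    by (rule region_mem) (auto simp: lo_def intro: r_nonneg)
  ultimately have "dist (med (\<lambda>i. hi i t)) (med (\<lambda>i. lo i t)) \<le> dm t"
    unfolding dm_def by (intro diameter_bounded_bound region_bounded)
  thus ?thesis by (simp add: dist_real_def)
qed

end



lemma card_minus_one: "finite S \<Longrightarrow> card S - 1 \<le> card (S - {d})"
  by (simp add: card_Diff_singleton_if)

context inst begin

lemma lo_le_hi: "i < n \<Longrightarrow> lo i t \<le> hi i t"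
  using r_nonneg[of i t] by (simp add: lo_def hi_def)

lemma nd_gap: "1 \<le> t \<Longrightarrow> i < n \<Longrightarrow> i \<noteq> \<sigma> t \<Longrightarrow> lo i t + 2 * Vmin \<le> hi i t"
  using r_other[of t i] Vmin_le[of i] by (simp add: lo_def hi_def)

lemma lo_self: "1 \<le> t \<Longrightarrow> lo (\<sigma> t) t = c t"
  using r_self a_self by (simp add: lo_def)
lemma hi_self: "1 \<le> t \<Longrightarrow> hi (\<sigma> t) t = c t"
  using r_self a_self by (simp add: hi_def)

lemma even_lb:
  assumes ev: "even n" and t: "1 \<le> t"
  shows "Vmin \<le> med (\<lambda>i. hi i t) - med (\<lambda>i. lo i t)"
proof -
  define k where "k = n div 2"
  define L where "L = (\<lambda>i. lo i t)"
  define H where "H = (\<lambda>i. hi i t)"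
  define V where "V = Vmin"
  define d where "d = \<sigma> t"
  have k: "1 \<le> k" "k < n" "k - 1 < n" "n - (k - 1) - 1 = n - k" "Suc (k - 1) = k"
    using n2 unfolding k_def by auto
  have dn: "d < n" using sig[OF t] by (simp add: d_def)
  define \<alpha> where "\<alpha> = os n L (k - 1)"
  define \<beta> where "\<beta> = os n L k"
  define \<gamma> where "\<gamma> = os n H (k - 1)"
  define \<eta> where "\<eta> = os n H k"
  have medH: "med H = (\<gamma> + \<eta>) / 2" unfolding med_def median_os \<gamma>_def \<eta>_def k_def using ev by simp
  have medL: "med L = (\<alpha> + \<beta>) / 2" unfolding med_def median_os \<alpha>_def \<beta>_def k_def using ev by simp
  have LH: "\<And>i. i < n \<Longrightarrow> L i \<le> H i + 0" using lo_le_hi by (simp add: L_def H_def)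
  have gap: "\<And>i. i < n \<Longrightarrow> i \<noteq> d \<Longrightarrow> L i + 2 * V \<le> H i"
    using nd_gap[OF t] by (simp add: L_def H_def V_def d_def)
  have Ld: "L d = c t" and Hd: "H d = c t"
    using lo_self[OF t] hi_self[OF t] by (simp_all add: L_def H_def d_def)
  have ag: "\<alpha> \<le> \<gamma>" unfolding \<alpha>_def \<gamma>_def using os_mono[OF k(3) LH] by simp
  have be: "\<beta> \<le> \<eta>" unfolding \<beta>_def \<eta>_def using os_mono[OF k(2) LH] by simp
  have ea: "\<alpha> + 2 * V \<le> \<eta>"
  proof -
    define S where "S = {i. i < n \<and> \<alpha> \<le> L i}"
    have fS: "finite S" unfolding S_def by simp
    have "n - (k - 1) \<le> card S" unfolding S_def \<alpha>_def by (rule OC2[OF k(3)])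
    hence "n - k \<le> card (S - {d})" using card_minus_one[OF fS, of d] k(4) by linarith
    also have "\<dots> \<le> card {i. i < n \<and> \<alpha> + 2 * V \<le> H i}"
      by (rule card_mono) (auto simp: S_def dest: gap)
    finally show ?thesis unfolding \<eta>_def by (rule OC4[OF k(2)])
  qed
  have main: "\<alpha> + \<beta> + 2 * V \<le> \<gamma> + \<eta>"
  proof (cases "c t < \<beta>")
    case True
    have "n - k \<le> card {i. i < n \<and> \<beta> \<le> L i}" unfolding \<beta>_def by (rule OC2[OF k(2)])
    also have "\<dots> \<le> card {i. i < n \<and> \<beta> + 2 * V \<le> H i}"
    proof (rule card_mono)
      show "{i. i < n \<and> \<beta> \<le> L i} \<subseteq> {i. i < n \<and> \<beta> + 2 * V \<le> H i}"
      proof safe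
        fix i assume i: "i < n" "\<beta> \<le> L i"
        hence "i \<noteq> d" using True Ld by auto
        thus "\<beta> + 2 * V \<le> H i" using gap[OF i(1)] i by linarith
      qed
    qed simp
    finally have "\<beta> + 2 * V \<le> \<eta>" unfolding \<eta>_def by (rule OC4[OF k(2)])
    thus ?thesis using ag by linarith
  next
    case False
    show ?thesis
    proof (cases "\<beta> \<le> \<gamma>")
      case True thus ?thesis using ea by linarith
    next
      case False2: False
      have "Suc (k - 1) \<le> card {i. i < n \<and> H i \<le> \<gamma>}" unfolding \<gamma>_def by (rule OC1[OF k(3)])
      also have "\<dots> \<le> card {i. i < n \<and> L i \<le> \<gamma> - 2 * V}"
      proof (rule card_mono)
        show "{i. i < n \<and> H i \<le> \<gamma>} \<subseteq> {i. i < n \<and> L i \<le> \<gamma> - 2 * V}"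
        proof safe
          fix i assume i: "i < n" "H i \<le> \<gamma>"
          hence "i \<noteq> d" using False False2 Hd by auto
          thus "L i \<le> \<gamma> - 2 * V" using gap[OF i(1)] i by linarith
        qed
      qed simp
      finally have "\<alpha> \<le> \<gamma> - 2 * V" unfolding \<alpha>_def by (rule OC3[OF k(3)])
      thus ?thesis using be by linarith
    qed
  qed
  show ?thesis using main medH medL unfolding V_def L_def H_def by simp
qed

end



context inst begin

definition "del = Vmin / 2"
definition "Os t = {i. i < n \<and> i \<noteq> \<sigma> t}"
definition "Rs t = {i. i < n \<and> i \<noteq> \<sigma> t \<and> c t - del \<le> lo i t}"
definition "Ls t = {i. i < n \<and> i \<noteq> \<sigma> t \<and> hi i t \<le> c t + del}"

lemma del_pos: "0 < del" using Vmin_pos by (simp add: del_def)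

lemma fin_Os: "finite (Os t)" by (simp add: Os_def)

lemma card_Os: "1 \<le> t \<Longrightarrow> card (Os t) = n - 1"
proof -
  assume t: "1 \<le> t"
  have "Os t = {..<n} - {\<sigma> t}" by (auto simp: Os_def)
  thus ?thesis using sig[OF t] by simp
qed

lemma odd_struct:
  assumes od: "odd n" and t: "1 \<le> t" and dmt: "dm t < del"
  shows "\<And>i. i < n \<Longrightarrow> i \<noteq> \<sigma> t \<Longrightarrow> i \<in> Rs t \<or> i \<in> Ls t"
    and "Rs t \<inter> Ls t = {}" and "card (Ls t) = card (Rs t)"
proof -
  define m where "m = n div 2"
  define L where "L = (\<lambda>i. lo i t)"
  define H where "H = (\<lambda>i. hi i t)"
  define V where "V = Vmin"
  define d where "d = \<sigma> t"
  have nm: "n = 2 * m + 1" "m < n" using od n2 unfolding m_def by auto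
  have dn: "d < n" using sig[OF t] by (simp add: d_def)
  have Vp: "0 < V" using Vmin_pos by (simp add: V_def)
  have dV: "del = V / 2" by (simp add: del_def V_def)
  define A where "A = os n L m"
  define B where "B = os n H m"
  have "med H - med L \<le> dm t" using dm_lower by (simp add: H_def L_def)
  moreover have "med H = B" "med L = A" unfolding med_def median_os A_def B_def m_def using od by simp_all
  ultimately have BA: "B - A < del" using dmt by simp
  have gap: "\<And>i. i < n \<Longrightarrow> i \<noteq> d \<Longrightarrow> L i + 2 * V \<le> H i"
    using nd_gap[OF t] by (simp add: L_def H_def V_def d_def)
  have Ld: "L d = c t" and Hd: "H d = c t"
    using lo_self[OF t] hi_self[OF t] by (simp_all add: L_def H_def d_def)
  define Sh where "Sh = {i. i < n \<and> H i \<le> B}"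
  define Sl where "Sl = {i. i < n \<and> A \<le> L i}"
  have fSh: "finite Sh" and fSl: "finite Sl" by (simp_all add: Sh_def Sl_def)
  have cSh: "Suc m \<le> card Sh" unfolding Sh_def B_def by (rule OC1[OF nm(2)])
  have cSl: "Suc m \<le> card Sl" using OC2[OF nm(2), of L] nm(1) unfolding Sl_def A_def by simp
  have "d \<in> Sh"
  proof (rule ccontr)
    assume nd: "d \<notin> Sh"
    have "Sh \<subseteq> {..<n} - Sl"
    proof
      fix i assume i: "i \<in> Sh"
      hence "i \<noteq> d" "i < n" "H i \<le> B" using nd by (auto simp: Sh_def)
      hence "L i < A" using gap[of i] BA dV Vp by linarith
      thus "i \<in> {..<n} - Sl" using \<open>i < n\<close> by (auto simp: Sl_def)
    qed
    hence "card Sh \<le> card ({..<n} - Sl)" by (intro card_mono) auto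
    also have "\<dots> = n - card Sl" by (subst card_Diff_subset) (auto simp: Sl_def)
    finally show False using cSh cSl nm(1) by linarith
  qed
  hence cB: "c t \<le> B" using Hd by (simp add: Sh_def)
  have "d \<in> Sl"
  proof (rule ccontr)
    assume nd: "d \<notin> Sl"
    have "Sl \<subseteq> {..<n} - Sh"
    proof
      fix i assume i: "i \<in> Sl"
      hence "i \<noteq> d" "i < n" "A \<le> L i" using nd by (auto simp: Sl_def)
      hence "B < H i" using gap[of i] BA dV Vp by linarith
      thus "i \<in> {..<n} - Sh" using \<open>i < n\<close> by (auto simp: Sh_def)
    qed
    hence "card Sl \<le> card ({..<n} - Sh)" by (intro card_mono) auto
    also have "\<dots> = n - card Sh" by (subst card_Diff_subset) (auto simp: Sh_def)
    finally show False using cSh cSl nm(1) by linarith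
  qed
  hence cA: "A \<le> c t" using Ld by (simp add: Sl_def)
  have "Sh - {d} \<subseteq> Ls t"
    using BA cA by (auto simp: Sh_def Ls_def H_def d_def)
  hence cL: "m \<le> card (Ls t)"
    using card_minus_one[OF fSh, of d] cSh card_mono[of "Ls t" "Sh - {d}"]
    by (simp add: Ls_def)
  have "Sl - {d} \<subseteq> Rs t"
    using BA cB by (auto simp: Sl_def Rs_def L_def d_def)
  hence cR: "m \<le> card (Rs t)"
    using card_minus_one[OF fSl, of d] cSl card_mono[of "Rs t" "Sl - {d}"]
    by (simp add: Rs_def)
  show disj: "Rs t \<inter> Ls t = {}"
  proof (rule ccontr)
    assume "Rs t \<inter> Ls t \<noteq> {}"
    then obtain i where "i \<in> Rs t" "i \<in> Ls t" by blast
    hence "i < n" "i \<noteq> d" "c t - del \<le> L i" "H i \<le> c t + del"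
      by (auto simp: Rs_def Ls_def L_def H_def d_def)
    thus False using gap[of i] dV Vp by linarith
  qed
  have sub: "Rs t \<union> Ls t \<subseteq> Os t" by (auto simp: Rs_def Ls_def Os_def)
  have cU: "card (Rs t \<union> Ls t) = card (Rs t) + card (Ls t)"
    by (rule card_Un_disjoint[OF _ _ disj]) (simp_all add: Rs_def Ls_def)
  have "card (Rs t \<union> Ls t) \<le> card (Os t)" by (rule card_mono[OF fin_Os sub])
  hence le: "card (Rs t) + card (Ls t) \<le> 2 * m" using cU card_Os[OF t] nm(1) by simp
  show "card (Ls t) = card (Rs t)" using le cL cR by linarith
  have "card (Rs t \<union> Ls t) = card (Os t)" using le cL cR cU card_Os[OF t] nm(1) by simp
  hence eq: "Rs t \<union> Ls t = Os t" by (rule card_subset_eq[OF fin_Os sub])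
  fix i assume "i < n" "i \<noteq> \<sigma> t"
  hence "i \<in> Os t" by (simp add: Os_def)
  thus "i \<in> Rs t \<or> i \<in> Ls t" using eq by blast
qed

end



context inst begin

definition "e t i = (if i \<in> Rs t then lo i t - c t else c t - hi i t)"
definition "Psi t = (\<Sum>i\<in>Os t. e t i)"

lemma e_lb:
  assumes "odd n" "1 \<le> t" "dm t < del" "i \<in> Os t"
  shows "- del \<le> e t i"
proof -
  have "i \<in> Rs t \<or> i \<in> Ls t" using odd_struct(1)[OF assms(1-3)] assms(4) by (auto simp: Os_def)
  thus ?thesis by (auto simp: e_def Rs_def Ls_def)
qed

lemma psi_lb:
  assumes "odd n" "1 \<le> t" "dm t < del"
  shows "- (real n * del) \<le> Psi t"
proof -
  have "(\<Sum>i\<in>Os t. - del) \<le> Psi t" unfolding Psi_def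
    by (rule sum_mono) (rule e_lb[OF assms])
  moreover have "(\<Sum>i\<in>Os t. - del) = - (real (card (Os t)) * del)" by simp
  moreover have "card (Os t) \<le> n" using card_Os[OF assms(2)] by simp
  ultimately show ?thesis using del_pos
    by (smt (verit, best) mult_right_mono of_nat_le_iff)
qed

lemma step_obj:
  assumes od: "odd n" and t: "1 \<le> t" and d1: "dm t < del"
    and i: "i \<in> Os (Suc t)"
  shows "e (Suc t) i \<le> (if i \<in> Os t then e t i else 0)
            + (if i \<in> Rs (Suc t) then -1 else 1) * (c (Suc t) - c t) - v i"
proof -
  have iS: "i < n" "\<sigma> (Suc t) \<noteq> i" using i by (auto simp: Os_def)
  have loS: "lo i (Suc t) = lo i t - v i" and hiS: "hi i (Suc t) = hi i t + v i"
    using a_Suc[OF iS(2)] r_Suc[OF iS(2)] by (simp_all add: lo_def hi_def)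
  show ?thesis
  proof (cases "i = \<sigma> t")
    case True
    hence "lo i t = c t" "hi i t = c t" "i \<notin> Os t"
      using lo_self[OF t] hi_self[OF t] by (auto simp: Os_def)
    thus ?thesis using loS hiS by (auto simp: e_def)
  next
    case False
    hence iO: "i \<in> Os t" using iS by (simp add: Os_def)
    have cov: "i \<in> Rs t \<or> i \<in> Ls t" using odd_struct(1)[OF od t d1] iS(1) False by auto
    have rV: "Vmin \<le> r i t" using r_other[OF t iS(1) False] Vmin_le[OF iS(1)] by linarith
    have dV: "del \<le> Vmin" using Vmin_pos by (simp add: del_def)
    have R: "i \<in> Rs t \<Longrightarrow> c t - del \<le> a i t - r i t" by (simp add: Rs_def lo_def)
    have L: "i \<in> Ls t \<Longrightarrow> a i t + r i t \<le> c t + del" by (simp add: Ls_def hi_def)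
    show ?thesis using iO cov rV dV R L loS hiS
      unfolding e_def lo_def hi_def by (auto split: if_splits)
  qed
qed

lemma psi_step:
  assumes od: "odd n" and t: "1 \<le> t" and d1: "dm t < del" and d2: "dm (Suc t) < del"
  shows "Psi (Suc t) \<le> Psi t - del"
proof -
  have t': "1 \<le> Suc t" by simp
  define \<Delta> where "\<Delta> = c (Suc t) - c t"
  define g where "g i = (if i \<in> Os t then e t i else 0)" for i
  define s where "s i = (if i \<in> Rs (Suc t) then -1 else (1::real))" for i
  have "Psi (Suc t) \<le> (\<Sum>i\<in>Os (Suc t). g i + s i * \<Delta> - v i)"
    unfolding Psi_def by (rule sum_mono) (use step_obj[OF od t d1] in \<open>simp add: g_def s_def \<Delta>_def\<close>)
  also have "\<dots> = (\<Sum>i\<in>Os (Suc t). g i) + (\<Sum>i\<in>Os (Suc t). s i) * \<Delta> - (\<Sum>i\<in>Os (Suc t). v i)"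
    by (simp add: sum.distrib sum_subtractf sum_distrib_right)
  also have "(\<Sum>i\<in>Os (Suc t). s i) = 0"
  proof -
    have cov: "\<And>i. i \<in> Os (Suc t) \<Longrightarrow> i \<in> Rs (Suc t) \<or> i \<in> Ls (Suc t)"
      using odd_struct(1)[OF od t' d2] by (auto simp: Os_def)
    have disj: "Rs (Suc t) \<inter> Ls (Suc t) = {}" using odd_struct(2)[OF od t' d2] .
    have "(\<Sum>i\<in>Os (Suc t). s i) = (\<Sum>i\<in>Os (Suc t) \<inter> {i. i \<in> Rs (Suc t)}. -1) + (\<Sum>i\<in>Os (Suc t) \<inter> - {i. i \<in> Rs (Suc t)}. 1)"
      unfolding s_def by (rule sum.If_cases[OF fin_Os])
    also have "Os (Suc t) \<inter> {i. i \<in> Rs (Suc t)} = Rs (Suc t)" by (auto simp: Os_def Rs_def)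
    also have "Os (Suc t) \<inter> - {i. i \<in> Rs (Suc t)} = Ls (Suc t)"
      using cov disj by (auto simp: Os_def Ls_def)
    finally show ?thesis using odd_struct(3)[OF od t' d2] by simp
  qed
  also have "(\<Sum>i\<in>Os (Suc t). g i) \<le> Psi t + del"
  proof (cases "\<sigma> (Suc t) = \<sigma> t")
    case True
    hence "Os (Suc t) = Os t" by (simp add: Os_def)
    thus ?thesis unfolding g_def Psi_def using del_pos by simp
  next
    case False
    have j: "\<sigma> (Suc t) \<in> Os t" using False sig[OF t'] by (simp add: Os_def)
    have "(\<Sum>i\<in>Os (Suc t). g i) = (\<Sum>i\<in>Os (Suc t) \<inter> Os t. e t i)"
      unfolding g_def by (rule sum.inter_restrict[OF fin_Os, symmetric])
    also have "Os (Suc t) \<inter> Os t = Os t - {\<sigma> (Suc t)}" by (auto simp: Os_def)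
    also have "(\<Sum>i\<in>Os t - {\<sigma> (Suc t)}. e t i) = Psi t - e t (\<sigma> (Suc t))"
      unfolding Psi_def using j by (simp add: sum_diff1 fin_Os)
    finally show ?thesis using e_lb[OF od t d1 j] by linarith
  qed
  also have "Vmin \<le> (\<Sum>i\<in>Os (Suc t). v i)"
  proof -
    define i0 where "i0 = (if \<sigma> (Suc t) = 0 then 1 else (0::nat))"
    have i0: "i0 \<in> Os (Suc t)" using n2 by (auto simp: Os_def i0_def)
    hence "v i0 \<le> (\<Sum>i\<in>Os (Suc t). v i)"
      by (intro member_le_sum fin_Os) (auto simp: Os_def intro: less_imp_le vpos)
    moreover have "Vmin \<le> v i0" using i0 Vmin_le by (auto simp: Os_def)
    ultimately show ?thesis by linarith
  qed
  ultimately show ?thesis by (simp add: del_def)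
qed

lemma odd_lb:
  assumes od: "odd n" and all: "\<And>t. 1 \<le> t \<Longrightarrow> dm t < del"
  shows False
proof -
  have it: "Psi (Suc N) \<le> Psi 1 - real N * del" for N
  proof (induction N)
    case 0 thus ?case by simp
  next
    case (Suc N)
    have "Psi (Suc (Suc N)) \<le> Psi (Suc N) - del"
      by (rule psi_step[OF od]) (auto intro: all)
    thus ?case using Suc by (simp add: algebra_simps)
  qed
  obtain N :: nat where N: "(Psi 1 + real n * del) / del < real N"
    using reals_Archimedean2 by blast
  hence "Psi 1 + real n * del < real N * del" using del_pos by (simp add: divide_less_eq)
  moreover have "- (real n * del) \<le> Psi (Suc N)" by (rule psi_lb[OF od]) (auto intro: all)
  ultimately show False using it[of N] by linarith
qed

end



context inst begin

lemma measure_eq: "measure_strat n v p \<sigma> = (SUP t\<in>{1..}. ereal (dm t))"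
  by (simp add: measure_strat_def dm_def)

lemma lower: "ereal (Vmin / 2) \<le> measure_strat n v p \<sigma>"
proof (rule ccontr)
  assume "\<not> ereal (Vmin / 2) \<le> measure_strat n v p \<sigma>"
  hence lt: "measure_strat n v p \<sigma> < ereal del" by (simp add: del_def not_le)
  have all: "dm t < del" if "1 \<le> t" for t
  proof -
    have "ereal (dm t) \<le> measure_strat n v p \<sigma>" unfolding measure_eq
      by (rule SUP_upper) (use that in simp)
    from order_le_less_trans[OF this lt] show ?thesis by simp
  qed
  show False
  proof (cases "even n")
    case True
    have "Vmin \<le> dm 1" using even_lb[OF True, of 1] dm_lower[of 1] by simp
    thus False using all[of 1] Vmin_pos by (simp add: del_def)
  next
    case False
    thus False using odd_lb all by blast
  qed
qed

end

lemma rr_upper: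
  assumes vi: "valid_instance n v p"
  shows "measure_strat n v p (round_robin n) \<le> ereal (2 * (real n * Max (v ` {..<n})))"
proof -
  have n2: "2 \<le> n" using vi by (simp add: valid_instance_def)
  have vs: "valid_strategy n (round_robin n)" using n2 by (simp add: valid_strategy_def round_robin_def)
  interpret inst n v p "round_robin n" using vi vs by unfold_locales
  define B where "B = real n * Max (v ` {..<n})"
  have vM: "i < n \<Longrightarrow> v i \<le> Max (v ` {..<n})" for i by (rule Max_ge) auto
  have "v 0 \<le> Max (v ` {..<n})" by (rule vM) (use n2 in simp)
  moreover have "0 < v 0" using vpos[of 0] n2 by simp
  ultimately have B0: "0 \<le> B" unfolding B_def by (intro mult_nonneg_nonneg) auto
  have "dm t \<le> 2 * B" for t
  proof (rule dm_upper)
    show "0 \<le> B" by (rule B0)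
    fix i assume i: "i < n"
    have "real t - real (last_query (round_robin n) i t) \<le> real n"
      using lq_rr[of n i t] i by linarith
    moreover have "real t - real (last_query (round_robin n) i t) \<ge> 0"
      using lq_le[of "round_robin n" i t] by simp
    ultimately have "v i * (real t - real (last_query (round_robin n) i t)) \<le> Max (v ` {..<n}) * real n"
      using vM[OF i] vpos[OF i] by (intro mult_mono) auto
    thus "r i t \<le> B" by (simp add: r_def B_def mult.commute)
  qed
  thus ?thesis unfolding measure_eq B_def by (intro SUP_least) simp
qed

lemma opt_lower:
  assumes vi: "valid_instance n v p"
  shows "ereal (Min (v ` {..<n}) / 2) \<le> OPT n v p"
  unfolding OPT_def
proof (rule INF_greatest)
  fix \<sigma> assume "\<sigma> \<in> {\<sigma>. valid_strategy n \<sigma>}"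
  hence "valid_strategy n \<sigma>" by simp
  then interpret inst n v p \<sigma> using vi by unfold_locales
  show "ereal (Min (v ` {..<n}) / 2) \<le> measure_strat n v p \<sigma>" using lower by (simp add: Vmin_def)
qed

theorem proposition5:
  shows "\<exists>C::real. \<forall>n v p. valid_instance n v p \<longrightarrow>
    measure_strat n v p (round_robin n) \<le>
      ereal (C * (Max (v ` {..<n}) * real n / Min (v ` {..<n}))) * OPT n v p"
proof (intro exI allI impI)
  fix n v p assume vi: "valid_instance n v p"
  have n2: "2 \<le> n" using vi by (simp add: valid_instance_def)
  have vs: "valid_strategy n (round_robin n)" using n2 by (simp add: valid_strategy_def round_robin_def)
  interpret inst n v p "round_robin n" using vi vs by unfold_locales
  define M where "M = Max (v ` {..<n})"
  define m where "m = Min (v ` {..<n})"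
  have mpos: "0 < m" using Vmin_pos by (simp add: m_def Vmin_def)
  have "v 0 \<le> M" unfolding M_def by (rule Max_ge) (use n2 in simp_all)
  hence MM: "0 \<le> M" using vpos[of 0] n2 by simp
  have X: "0 \<le> 4 * (M * real n / m)" using mpos MM by simp
  have "measure_strat n v p (round_robin n) \<le> ereal (2 * (real n * M))"
    using rr_upper[OF vi] by (simp add: M_def)
  also have "ereal (2 * (real n * M)) = ereal (4 * (M * real n / m)) * ereal (m / 2)"
    using mpos by (simp add: field_simps)
  also have "\<dots> \<le> ereal (4 * (M * real n / m)) * OPT n v p"
    by (rule ereal_mult_left_mono) (use opt_lower[OF vi] X in \<open>simp_all add: m_def\<close>)
  finally show "measure_strat n v p (round_robin n) \<le>
      ereal (4 * (Max (v ` {..<n}) * real n / Min (v ` {..<n}))) * OPT n v p"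
    by (simp add: M_def m_def)
qed



end
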